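(* Let $f:\mathbb{R}^n\times\mathbb{R}^m\to\mathbb{R}^n$ be a polynomial map and let $\boldsymbol\psi:\mathbb{R}^n\to\mathbb{R}^m$ be a Lipschitz continuous function whose graph satisfies \[ \{(x,\boldsymbol\psi(x)) : x\in\mathbb{R}^n\} = \{(x,u)\mid \exists\,\lambda\in\mathbb{R}^{n_\lambda}\ \text{s.t.}\ g(x,u,\lambda)\ge0,\ h(x,u,\lambda)=0\} \] for vector-valued polynomial maps $g,h$. Assume there exists $W\in C^2(\mathbb{R}^n)$ such that for all $x\in\mathbb{R}^n$, \[ W(f(x,\boldsymbol\psi(x))) - W(x)\le -\|x\|_2^2,\qquad W(x)\ge\|x\|_2^2. \] Let $\mathbf{X}\subset\mathbb{R}^n$ be compact and let \[ \mathbf{K}' = \{(x,x^+)\in\mathbb{R}^{2n}\mid x\in\mathbf{X},\ \exists\,(u,\lambda)\ \text{s.t.}\ g(x,u,\lambda)\ge0,\ h(x,u,\lambda)=0,\ x^+=f(x,u)\}. \] Then there exists a polynomial $V:\mathbb{R}^n\to\mathbb{R}$ such that for all $(x,x^+)\in\mathbf{K}'$, \[ V(x^+)-V(x)\le-\|x\|_2^2,\qquad V(x)\ge\|x\|_2^2. \] *)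

theory Defs
  imports "HOL-Analysis.Analysis"
begin

inductive polyfun :: "('a::euclidean_space \<Rightarrow> real) \<Rightarrow> bool" where
  const: "polyfun (\<lambda>x. c)"
| coord: "b \<in> Basis \<Longrightarrow> polyfun (\<lambda>x. x \<bullet> b)"
| add: "polyfun p \<Longrightarrow> polyfun q \<Longrightarrow> polyfun (\<lambda>x. p x + q x)"
| mult: "polyfun p \<Longrightarrow> polyfun q \<Longrightarrow> polyfun (\<lambda>x. p x * q x)"

definition polymap :: "('a::euclidean_space \<Rightarrow> real ^ 'k) \<Rightarrow> bool" where
  "polymap F \<longleftrightarrow> (\<forall>i. polyfun (\<lambda>x. F x $ i))"

definition C2_fun :: "('a::euclidean_space \<Rightarrow> real) \<Rightarrow> bool" where
  "C2_fun W \<longleftrightarrow> (\<exists>(W' :: 'a \<Rightarrow> ('a \<Rightarrow>\<^sub>L real)) (W'' :: 'a \<Rightarrow> ('a \<Rightarrow>\<^sub>L ('a \<Rightarrow>\<^sub>L real))).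
     (\<forall>x. (W has_derivative blinfun_apply (W' x)) (at x)) \<and>
     (\<forall>x. (W' has_derivative blinfun_apply (W'' x)) (at x)) \<and>
     continuous_on UNIV W'')"

end

theory Submission
  imports Defs
begin

lemma polyfun_sum: "finite S \<Longrightarrow> (\<And>i. i \<in> S \<Longrightarrow> polyfun (f i)) \<Longrightarrow> polyfun (\<lambda>x. \<Sum>i\<in>S. f i x)"
proof (induction S rule: finite_induct)
  case empty then show ?case by (simp add: polyfun.const)
next
  case (insert a S)
  have 1: "polyfun (f a)" using insert by auto
  have 2: "polyfun (\<lambda>x. \<Sum>i\<in>S. f i x)" using insert by auto
  have "polyfun (\<lambda>x. f a x + (\<Sum>i\<in>S. f i x))" using polyfun.add[OF 1 2] .
  then show ?case using insert by simp
qed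

lemma linear_polyfun:
  fixes f :: "'a::euclidean_space \<Rightarrow> real"
  assumes "bounded_linear f" shows "polyfun f"
proof -
  have e: "f = (\<lambda>x. \<Sum>b\<in>Basis. (x \<bullet> b) * f b)"
  proof (rule ext)
    fix x show "f x = (\<Sum>b\<in>Basis. (x \<bullet> b) * f b)"
      using Linear_Algebra.linear_componentwise[of f x 1] bounded_linear.linear[OF assms] by simp
  qed
  have P: "polyfun (\<lambda>x. \<Sum>b\<in>Basis. (x \<bullet> b) * f b)"
    by (rule polyfun_sum[OF finite_Basis], rule polyfun.mult[OF polyfun.coord polyfun.const])
  show ?thesis using P unfolding e[symmetric] .
qed

lemma rpf_polyfun:
  fixes p :: "'a::euclidean_space \<Rightarrow> real"
  shows "real_polynomial_function p \<Longrightarrow> polyfun p"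
proof (induction rule: real_polynomial_function.induct)
  case (linear f) then show ?case by (rule linear_polyfun)
next
  case (const c) then show ?case by (rule polyfun.const)
next
  case (add f g) show ?case using add.IH by (rule polyfun.add)
next
  case (mult f g) show ?case using mult.IH by (rule polyfun.mult)
qed

lemma polyfun_rpf:
  fixes p :: "'a::euclidean_space \<Rightarrow> real"
  assumes "polyfun p" shows "real_polynomial_function p"
  using assms
proof (induction rule: polyfun.induct)
  case (coord b) then show ?case by (intro Weierstrass_Theorems.real_polynomial_function.intros(1) bounded_linear_inner_left)
next
  case (const c) then show ?case by (rule Weierstrass_Theorems.real_polynomial_function.intros(2))
next
  case (add f g) show ?case using add.IH by (rule Weierstrass_Theorems.real_polynomial_function.intros(3))
next
  case (mult f g) show ?case using mult.IH by (rule Weierstrass_Theorems.real_polynomial_function.intros(4))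
qed

lemma polyfun_lip:
  fixes p :: "'a::euclidean_space \<Rightarrow> real"
  assumes "polyfun p" "bounded B"
  shows "\<exists>L M. (\<forall>x\<in>B. \<forall>y\<in>B. \<bar>p x - p y\<bar> \<le> L * norm (x - y)) \<and> (\<forall>x\<in>B. \<bar>p x\<bar> \<le> M)"
  using assms(1)
proof (induction rule: polyfun.induct)
  case (const c) then show ?case by (rule exI[of _ 0], rule exI[of _ "\<bar>c\<bar>"]) auto
next
  case (coord b)
  obtain M where M: "\<forall>x\<in>B. norm x \<le> M" using assms(2) bounded_iff by blast
  show ?case
  proof (rule exI[of _ 1], rule exI[of _ M], intro conjI ballI)
    fix x y assume "x \<in> B" "y \<in> B"
    have "\<bar>x \<bullet> b - y \<bullet> b\<bar> = \<bar>(x - y) \<bullet> b\<bar>" by (simp add: inner_diff_left)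
    also have "\<dots> \<le> norm (x - y)" using coord Basis_le_norm by blast
    finally show "\<bar>x \<bullet> b - y \<bullet> b\<bar> \<le> 1 * norm (x - y)" by simp
  next
    fix x assume "x \<in> B"
    have "\<bar>x \<bullet> b\<bar> \<le> norm x" using Basis_le_norm[OF coord] .
    then show "\<bar>x \<bullet> b\<bar> \<le> M" using M \<open>x \<in> B\<close> by fastforce
  qed
next
  case (add p q)
  then obtain L1 M1 L2 M2 where 1: "\<forall>x\<in>B. \<forall>y\<in>B. \<bar>p x - p y\<bar> \<le> L1 * norm (x - y)" "\<forall>x\<in>B. \<bar>p x\<bar> \<le> M1"
    and 2: "\<forall>x\<in>B. \<forall>y\<in>B. \<bar>q x - q y\<bar> \<le> L2 * norm (x - y)" "\<forall>x\<in>B. \<bar>q x\<bar> \<le> M2" by blast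
  show ?case
  proof (rule exI[of _ "L1 + L2"], rule exI[of _ "M1 + M2"], intro conjI ballI)
    fix x y assume "x \<in> B" "y \<in> B"
    then have "\<bar>p x - p y\<bar> \<le> L1 * norm (x - y)" "\<bar>q x - q y\<bar> \<le> L2 * norm (x - y)" using 1 2 by auto
    then show "\<bar>p x + q x - (p y + q y)\<bar> \<le> (L1 + L2) * norm (x - y)" by (simp add: algebra_simps)
  next
    fix x assume "x \<in> B"
    then show "\<bar>p x + q x\<bar> \<le> M1 + M2" using 1 2 by fastforce
  qed
next
  case (mult p q)
  then obtain L1 M1 L2 M2 where 1: "\<forall>x\<in>B. \<forall>y\<in>B. \<bar>p x - p y\<bar> \<le> L1 * norm (x - y)" "\<forall>x\<in>B. \<bar>p x\<bar> \<le> M1"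
    and 2: "\<forall>x\<in>B. \<forall>y\<in>B. \<bar>q x - q y\<bar> \<le> L2 * norm (x - y)" "\<forall>x\<in>B. \<bar>q x\<bar> \<le> M2" by blast
  show ?case
  proof (rule exI[of _ "M1 * L2 + M2 * L1"], rule exI[of _ "M1 * M2"], intro conjI ballI)
    fix x y assume xy: "x \<in> B" "y \<in> B"
    have px: "\<bar>p x\<bar> \<le> M1" and qy: "\<bar>q y\<bar> \<le> M2" using 1 2 xy by auto
    have dq: "\<bar>q x - q y\<bar> \<le> L2 * norm (x - y)" and dp: "\<bar>p x - p y\<bar> \<le> L1 * norm (x - y)"
      using 1 2 xy by auto
    have e: "p x * q x - p y * q y = p x * (q x - q y) + q y * (p x - p y)" by (simp add: algebra_simps)
    have a: "\<bar>p x\<bar> * \<bar>q x - q y\<bar> \<le> M1 * (L2 * norm (x - y))"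
      by (rule mult_mono[OF px dq]) (use px in auto)
    have b: "\<bar>q y\<bar> * \<bar>p x - p y\<bar> \<le> M2 * (L1 * norm (x - y))"
      by (rule mult_mono[OF qy dp]) (use qy in auto)
    have "\<bar>p x * q x - p y * q y\<bar> \<le> \<bar>p x\<bar> * \<bar>q x - q y\<bar> + \<bar>q y\<bar> * \<bar>p x - p y\<bar>"
      unfolding e abs_mult[symmetric] by (rule abs_triangle_ineq)
    also have "\<dots> \<le> (M1 * L2 + M2 * L1) * norm (x - y)" using a b by (simp add: distrib_right mult.assoc)
    finally show "\<bar>p x * q x - p y * q y\<bar> \<le> (M1 * L2 + M2 * L1) * norm (x - y)" .
  next
    fix x assume x: "x \<in> B"
    have px: "\<bar>p x\<bar> \<le> M1" and qx: "\<bar>q x\<bar> \<le> M2" using 1 2 x by auto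
    show "\<bar>p x * q x\<bar> \<le> M1 * M2" unfolding abs_mult by (rule mult_mono[OF px qx]) (use px in auto)
  qed
qed

lemma fixed_zero:
  fixes F :: "'a::real_normed_vector \<Rightarrow> 'a" and W :: "'a \<Rightarrow> real"
  assumes cont: "isCont W 0" and dec: "\<forall>x. W (F x) - W x \<le> - (norm x)\<^sup>2"
    and pos: "\<forall>x. W x \<ge> (norm x)\<^sup>2"
  shows "F 0 = 0"
proof -
  define s where "s k = (F ^^ k) 0" for k
  have s0: "s 0 = 0" and sS: "s (Suc k) = F (s k)" for k by (simp_all add: s_def)
  have main: "W (s k) + (\<Sum>j<k. (norm (s j))\<^sup>2) \<le> W 0" for k
  proof (induction k)
    case 0 then show ?case by (simp add: s0)
  next
    case (Suc k)
    have "W (s (Suc k)) \<le> W (s k) - (norm (s k))\<^sup>2" using dec sS by (metis diff_le_eq add.commute uminus_add_conv_diff)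
    then show ?case using Suc by simp
  qed
  have Wnn: "W y \<ge> 0" for y using pos[rule_format, of y] by (meson order_trans zero_le_power2)
  have bnd: "(\<Sum>j\<le>n. (norm (s j))\<^sup>2) \<le> W 0" for n
    using main[of "Suc n"] Wnn[of "s (Suc n)"] lessThan_Suc_atMost by simp
  have summ: "summable (\<lambda>j. (norm (s j))\<^sup>2)"
    by (rule bounded_imp_summable[OF _ bnd]) simp
  have "(\<lambda>j. (norm (s j))\<^sup>2) \<longlonglongrightarrow> 0" using summable_LIMSEQ_zero[OF summ] .
  then have "(\<lambda>j. sqrt ((norm (s j))\<^sup>2)) \<longlonglongrightarrow> sqrt 0" by (rule tendsto_real_sqrt)
  then have "(\<lambda>j. norm (s j)) \<longlonglongrightarrow> 0" by simp
  then have sl: "s \<longlonglongrightarrow> 0" by (simp add: tendsto_norm_zero_iff)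
  have Wl: "(\<lambda>j. W (s j)) \<longlonglongrightarrow> W 0" using isCont_tendsto_compose[OF cont sl] .
  have ev: "\<forall>\<^sub>F j in sequentially. W (s j) \<le> W 0 - (norm (s 1))\<^sup>2"
  proof (rule eventually_sequentiallyI[of 2])
    fix j :: nat assume "2 \<le> j"
    then have "1 \<in> {..<j}" by simp
    then have "(norm (s 1))\<^sup>2 \<le> (\<Sum>i<j. (norm (s i))\<^sup>2)"
      by (intro member_le_sum) auto
    then show "W (s j) \<le> W 0 - (norm (s 1))\<^sup>2" using main[of j] by simp
  qed
  have "W 0 \<le> W 0 - (norm (s 1))\<^sup>2" using tendsto_upperbound[OF Wl ev] by simp
  then have "s 1 = 0" by simp
  then show ?thesis using sS[of 0] s0 by simp
qed

lemma taylor2: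
  fixes W :: "'a::real_normed_vector \<Rightarrow> real"
  assumes d1: "\<forall>x. (W has_derivative blinfun_apply (W' x)) (at x)"
    and d2: "\<forall>x. (W' has_derivative blinfun_apply (W'' x)) (at x)"
  shows "\<exists>t. 0 < t \<and> t < 1 \<and> W x = W 0 + W' 0 x + W'' (t *\<^sub>R x) x x / 2"
proof -
  define diff :: "nat \<Rightarrow> real \<Rightarrow> real" where "diff = (\<lambda>m t. if m = 0 then W (t *\<^sub>R x) else if m = 1 then blinfun_apply (W' (t *\<^sub>R x)) x
     else blinfun_apply (blinfun_apply (W'' (t *\<^sub>R x)) x) x)"
  have lin: "((\<lambda>t::real. t *\<^sub>R x) has_derivative (\<lambda>h. h *\<^sub>R x)) (at t)" for t
    by (intro derivative_eq_intros) auto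
  have D0: "DERIV (\<lambda>t. W (t *\<^sub>R x)) t :> W' (t *\<^sub>R x) x" for t
  proof -
    have X: "((\<lambda>t. W (t *\<^sub>R x)) has_derivative (\<lambda>h. W' (t *\<^sub>R x) (h *\<^sub>R x))) (at t)"
      using has_derivative_compose[OF lin d1[rule_format]] by simp
    have e: "(\<lambda>h. W' (t *\<^sub>R x) (h *\<^sub>R x)) = (*) (W' (t *\<^sub>R x) x)"
      by (simp add: fun_eq_iff blinfun.scaleR_right)
    show ?thesis unfolding has_field_derivative_def using X unfolding e .
  qed
  have D1: "DERIV (\<lambda>t. W' (t *\<^sub>R x) x) t :> W'' (t *\<^sub>R x) x x" for t
  proof -
    have "((\<lambda>t. W' (t *\<^sub>R x)) has_derivative (\<lambda>h. W'' (t *\<^sub>R x) (h *\<^sub>R x))) (at t)"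
      using has_derivative_compose[OF lin d2[rule_format]] by simp
    then have X: "((\<lambda>t. W' (t *\<^sub>R x) x) has_derivative (\<lambda>h. W'' (t *\<^sub>R x) (h *\<^sub>R x) x)) (at t)"
      by (rule bounded_linear.has_derivative[OF blinfun.bounded_linear_left])
    have e: "(\<lambda>h. W'' (t *\<^sub>R x) (h *\<^sub>R x) x) = (*) (W'' (t *\<^sub>R x) x x)"
      by (simp add: fun_eq_iff blinfun.scaleR_right blinfun.scaleR_left)
    show ?thesis unfolding has_field_derivative_def using X unfolding e .
  qed
  have "\<exists>t. 0 < t \<and> t < 1 \<and>
      diff 0 1 = sum (\<lambda>m. (diff m 0 / fact m) * 1 ^ m) {..<2} + (diff 2 t / fact 2) * 1 ^ 2"
  proof (rule Maclaurin)
    show "\<forall>m t. m < 2 \<and> 0 \<le> t \<and> t \<le> 1 \<longrightarrow> DERIV (diff m) t :> diff (Suc m) t"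
    proof (intro allI impI)
      fix m :: nat and t :: real assume "m < 2 \<and> 0 \<le> t \<and> t \<le> 1"
      then have "m = 0 \<or> m = 1" by auto
      then show "DERIV (diff m) t :> diff (Suc m) t"
      proof
        assume "m = 0" then show ?thesis using D0[of t] by (simp add: diff_def)
      next
        assume "m = 1" then show ?thesis using D1[of t] by (simp add: diff_def)
      qed
    qed
  qed auto
  then obtain t where "0 < t" "t < 1"
    "diff 0 1 = sum (\<lambda>m. (diff m 0 / fact m) * 1 ^ m) {..<2} + (diff 2 t / fact 2) * 1 ^ 2" by blast
  moreover have "{..<2::nat} = {0, 1}" by auto
  ultimately show ?thesis by (intro exI[of _ t]) (simp add: diff_def)
qed

lemma remainder_small:
  fixes W :: "'a::real_normed_vector \<Rightarrow> real"
  assumes d1: "\<forall>x. (W has_derivative blinfun_apply (W' x)) (at x)"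
    and d2: "\<forall>x. (W' has_derivative blinfun_apply (W'' x)) (at x)"
    and c2: "continuous_on UNIV W''" and e: "e > 0"
  shows "\<exists>d>0. \<forall>x. norm x < d \<longrightarrow> \<bar>W x - W 0 - W' 0 x - W'' 0 x x / 2\<bar> \<le> e * (norm x)\<^sup>2"
proof -
  have "isCont W'' 0" using c2 continuous_on_eq_continuous_at[of UNIV W''] by simp
  then obtain d where d: "d > 0" "\<And>y. dist y 0 < d \<Longrightarrow> dist (W'' y) (W'' 0) < e"
    using e unfolding continuous_at_eps_delta by blast
  show ?thesis
  proof (intro exI[of _ d] conjI allI impI)
    show "d > 0" by fact
    fix x :: 'a assume x: "norm x < d"
    obtain t where t: "0 < t" "t < 1" "W x = W 0 + W' 0 x + W'' (t *\<^sub>R x) x x / 2"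
      using taylor2[OF d1 d2, of x] by blast
    have "norm (t *\<^sub>R x) \<le> norm x" using t mult_left_le_one_le[of "norm x" t] by simp
    then have "dist (W'' (t *\<^sub>R x)) (W'' 0) < e" using d x by simp
    then have nb: "norm (W'' (t *\<^sub>R x) - W'' 0) \<le> e" by (simp add: dist_norm)
    have "W x - W 0 - W' 0 x - W'' 0 x x / 2 = (W'' (t *\<^sub>R x) - W'' 0) x x / 2"
    proof -
      have e1: "(W'' (t *\<^sub>R x) - W'' 0) x x = W'' (t *\<^sub>R x) x x - W'' 0 x x"
        by (simp only: blinfun.diff_left)
      show ?thesis unfolding e1 t(3) by (simp add: diff_divide_distrib)
    qed
    also have "\<bar>\<dots>\<bar> \<le> norm (W'' (t *\<^sub>R x) - W'' 0) * norm x * norm x / 2"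
    proof -
      have "\<bar>(W'' (t *\<^sub>R x) - W'' 0) x x\<bar> \<le> norm ((W'' (t *\<^sub>R x) - W'' 0) x) * norm x"
        using norm_blinfun[of "(W'' (t *\<^sub>R x) - W'' 0) x" x] by simp
      also have "\<dots> \<le> norm (W'' (t *\<^sub>R x) - W'' 0) * norm x * norm x"
        by (intro mult_right_mono norm_blinfun) simp
      finally show ?thesis by simp
    qed
    also have "\<dots> \<le> e * norm x * norm x / 2"
      by (intro divide_right_mono mult_right_mono nb) auto
    also have "\<dots> \<le> e * (norm x)\<^sup>2" using e by (simp add: power2_eq_square)
    finally show "\<bar>W x - W 0 - W' 0 x - W'' 0 x x / 2\<bar> \<le> e * (norm x)\<^sup>2" .
  qed
qed

lemma div_aux: fixes a c n :: real shows "n > 0 \<Longrightarrow> \<bar>a\<bar> \<le> c * n \<Longrightarrow> \<bar>a / n\<bar> \<le> c"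
  by (simp add: abs_divide pos_divide_le_eq)

lemma phi_cont:
  fixes W :: "'a::real_normed_vector \<Rightarrow> real"
  assumes d1: "\<forall>x. (W has_derivative blinfun_apply (W' x)) (at x)"
    and d2: "\<forall>x. (W' has_derivative blinfun_apply (W'' x)) (at x)"
    and c2: "continuous_on UNIV W''"
  shows "continuous_on S (\<lambda>x. (W x - W 0 - W' 0 x - W'' 0 x x / 2) / (norm x)\<^sup>2)"
proof -
  let ?r = "\<lambda>x. W x - W 0 - W' 0 x - W'' 0 x x / 2"
  have "isCont (\<lambda>x. ?r x / (norm x)\<^sup>2) x" for x
  proof (cases "x = 0")
    case False
    have "isCont W x" using has_derivative_continuous d1 by blast
    moreover have "isCont (\<lambda>y. W' 0 y) x" by (rule linear_continuous_at[OF blinfun.bounded_linear_right])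
    moreover have "isCont (\<lambda>y. W'' 0 y y) x"
      by (rule blinfun.continuous[OF linear_continuous_at[OF blinfun.bounded_linear_right] continuous_ident])
    moreover have "isCont (\<lambda>y. (norm y)\<^sup>2) x" by (intro continuous_intros)
    ultimately show ?thesis using False by (intro continuous_intros) simp_all
  next
    case True
    show ?thesis unfolding True continuous_at_eps_delta
    proof (intro allI impI)
      fix \<epsilon> :: real assume "\<epsilon> > 0"
      then obtain d where d: "d > 0" "\<And>x. norm x < d \<Longrightarrow> \<bar>?r x\<bar> \<le> \<epsilon> / 2 * (norm x)\<^sup>2"
        using remainder_small[OF d1 d2 c2, of "\<epsilon>/2"] by auto
      show "\<exists>\<delta>>0. \<forall>x'. dist x' 0 < \<delta> \<longrightarrow> dist (?r x' / (norm x')\<^sup>2) (?r 0 / (norm (0::'a))\<^sup>2) < \<epsilon>"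
      proof (intro exI[of _ d] conjI allI impI)
        fix x' :: 'a assume "dist x' 0 < d"
        then have h: "\<bar>?r x'\<bar> \<le> \<epsilon> / 2 * (norm x')\<^sup>2" using d by simp
        show "dist (?r x' / (norm x')\<^sup>2) (?r 0 / (norm (0::'a))\<^sup>2) < \<epsilon>"
        proof (cases "x' = 0")
          case True then show ?thesis using \<open>\<epsilon> > 0\<close> by simp
        next
          case False
          then have np: "(norm x')\<^sup>2 > 0" by simp
          have "\<bar>?r x' / (norm x')\<^sup>2\<bar> \<le> \<epsilon> / 2" by (rule div_aux[OF np h])
          moreover have "dist (?r x' / (norm x')\<^sup>2) (?r 0 / (norm (0::'a))\<^sup>2) = \<bar>?r x' / (norm x')\<^sup>2\<bar>"
            by (simp only: dist_real_def norm_zero power_zero_numeral div_by_0 diff_0_right)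
          ultimately show ?thesis using \<open>\<epsilon> > 0\<close> by linarith
        qed
      qed (use d in auto)
    qed
  qed
  then show ?thesis by (simp add: continuous_at_imp_continuous_on)
qed

lemma quad_rpf:
  fixes H :: "'a::euclidean_space \<Rightarrow>\<^sub>L ('a \<Rightarrow>\<^sub>L real)"
  shows "real_polynomial_function (\<lambda>x. H x x)"
proof -
  have e: "H x x = (\<Sum>b\<in>Basis. (x \<bullet> b) * H b x)" for x
  proof -
    have "H x = H (\<Sum>b\<in>Basis. (x \<bullet> b) *\<^sub>R b)"
      using arg_cong[where f="blinfun_apply H", OF euclidean_representation[of x, symmetric]] .
    also have "\<dots> = (\<Sum>b\<in>Basis. (x \<bullet> b) *\<^sub>R H b)"
      by (simp only: blinfun.sum_right blinfun.scaleR_right)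
    finally have "H x x = (\<Sum>b\<in>Basis. (x \<bullet> b) *\<^sub>R H b) x" by (rule arg_cong)
    also have "\<dots> = (\<Sum>b\<in>Basis. (x \<bullet> b) * H b x)"
      by (simp only: blinfun.sum_left blinfun.scaleR_left real_scaleR_def)
    finally show ?thesis .
  qed
  have "real_polynomial_function (\<lambda>x. \<Sum>b\<in>Basis. (x \<bullet> b) * H b x)"
    by (intro real_polynomial_function_sum Weierstrass_Theorems.real_polynomial_function.intros(4)
        Weierstrass_Theorems.real_polynomial_function.intros(1) bounded_linear_inner_left
        blinfun.bounded_linear_right finite_Basis)
  then show ?thesis unfolding e[symmetric] .
qed

lemma normsq_rpf:
  shows "real_polynomial_function (\<lambda>x::'a::euclidean_space. (norm x)\<^sup>2)"
proof -
  have e: "(norm x)\<^sup>2 = (\<Sum>b\<in>Basis. (x \<bullet> b) * (x \<bullet> b))" for x :: 'a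
    by (simp only: power2_norm_eq_inner euclidean_inner[of x x])
  have "real_polynomial_function (\<lambda>x::'a. \<Sum>b\<in>Basis. (x \<bullet> b) * (x \<bullet> b))"
    by (intro real_polynomial_function_sum Weierstrass_Theorems.real_polynomial_function.intros(4)
        Weierstrass_Theorems.real_polynomial_function.intros(1) bounded_linear_inner_left finite_Basis)
  then show ?thesis unfolding e[symmetric] .
qed

theorem theorem4:
  fixes f :: "(real ^ 'n) \<times> (real ^ 'm) \<Rightarrow> real ^ 'n"
    and \<psi> :: "real ^ 'n \<Rightarrow> real ^ 'm"
    and g :: "(real ^ 'n) \<times> (real ^ 'm) \<times> (real ^ 'l) \<Rightarrow> real ^ 'p"
    and h :: "(real ^ 'n) \<times> (real ^ 'm) \<times> (real ^ 'l) \<Rightarrow> real ^ 'q"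
    and W :: "real ^ 'n \<Rightarrow> real"
    and X :: "(real ^ 'n) set"
  assumes f_poly: "polymap f"
    and g_poly: "polymap g"
    and h_poly: "polymap h"
    and \<psi>_lip: "\<exists>L. L-lipschitz_on UNIV \<psi>"
    and graph: "{(x, \<psi> x) | x. True} =
                {(x, u). \<exists>lam. (\<forall>i. g (x, u, lam) $ i \<ge> 0) \<and> h (x, u, lam) = 0}"
    and W_C2: "C2_fun W"
    and W_dec: "\<forall>x. W (f (x, \<psi> x)) - W x \<le> - (norm x)\<^sup>2"
    and W_pos: "\<forall>x. W x \<ge> (norm x)\<^sup>2"
    and X_compact: "compact X"
  shows "\<exists>V :: real ^ 'n \<Rightarrow> real. polyfun V \<and>
           (\<forall>(x, xp) \<in> {(x, xp). x \<in> X \<and> (\<exists>u lam. (\<forall>i. g (x, u, lam) $ i \<ge> 0) \<and>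
                                  h (x, u, lam) = 0 \<and> xp = f (x, u))}.
              V xp - V x \<le> - (norm x)\<^sup>2 \<and> V x \<ge> (norm x)\<^sup>2)"
proof -
  obtain W' :: "(real ^ 'n) \<Rightarrow> ((real ^ 'n) \<Rightarrow>\<^sub>L real)" and W'' where
    d1: "\<forall>x. (W has_derivative blinfun_apply (W' x)) (at x)" and
    d2: "\<forall>x. (W' has_derivative blinfun_apply (W'' x)) (at x)" and
    c2: "continuous_on UNIV W''"
    using W_C2 unfolding C2_fun_def by blast
  define F where "F x = f (x, \<psi> x)" for x
  have F0: "F 0 = 0"
    unfolding F_def
  proof (rule fixed_zero[of W "\<lambda>x. f (x, \<psi> x)"])
    show "isCont W 0" using d1 has_derivative_continuous by blast
  qed (use W_dec W_pos in auto)
  obtain L\<psi> where L\<psi>: "L\<psi>-lipschitz_on UNIV \<psi>" using \<psi>_lip by blast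
  have L\<psi>0: "L\<psi> \<ge> 0" and L\<psi>d: "\<And>x y. dist (\<psi> x) (\<psi> y) \<le> L\<psi> * dist x y"
    using L\<psi> unfolding lipschitz_on_def by auto
  obtain R0 where R0: "\<forall>x\<in>X. norm x \<le> R0"
    using compact_imp_bounded[OF X_compact] bounded_iff by blast
  define R1 where "R1 = max R0 0"
  have R1: "\<forall>x\<in>insert 0 X. norm x \<le> R1" "R1 \<ge> 0" using R0 unfolding R1_def by auto
  define B where "B = (\<lambda>x. (x, \<psi> x)) ` insert 0 X"
  have psib: "norm (\<psi> x) \<le> norm (\<psi> 0) + L\<psi> * norm x" for x
    using L\<psi>d[of x 0] norm_triangle_ineq2[of "\<psi> x" "\<psi> 0"] by (simp add: dist_norm)
  have "bounded B"
    unfolding bounded_iff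
  proof (intro exI[of _ "R1 + norm (\<psi> 0) + L\<psi> * R1"] ballI)
    fix z assume "z \<in> B"
    then obtain x where x: "x \<in> insert 0 X" "z = (x, \<psi> x)" unfolding B_def by blast
    have "norm z \<le> norm x + norm (\<psi> x)" using x norm_Pair_le by simp
    also have "\<dots> \<le> R1 + norm (\<psi> 0) + L\<psi> * R1"
      using psib[of x] R1(1) x(1) mult_left_mono[of "norm x" R1 L\<psi>] L\<psi>0 by fastforce
    finally show "norm z \<le> R1 + norm (\<psi> 0) + L\<psi> * R1" .
  qed
  have "\<forall>i. \<exists>L. \<forall>z\<in>B. \<forall>w\<in>B. \<bar>f z $ i - f w $ i\<bar> \<le> L * norm (z - w)"
  proof
    fix i
    have "polyfun (\<lambda>z. f z $ i)" using f_poly unfolding polymap_def by blast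
    from polyfun_lip[OF this \<open>bounded B\<close>] show "\<exists>L. \<forall>z\<in>B. \<forall>w\<in>B. \<bar>f z $ i - f w $ i\<bar> \<le> L * norm (z - w)"
      by blast
  qed
  then obtain Lf where Lf: "\<And>i z w. z \<in> B \<Longrightarrow> w \<in> B \<Longrightarrow> \<bar>f z $ i - f w $ i\<bar> \<le> Lf i * norm (z - w)"
    by metis
  define C where "C = (\<Sum>i\<in>UNIV. \<bar>Lf i\<bar>) * (1 + L\<psi>)"
  have C0: "C \<ge> 0" unfolding C_def using L\<psi>0 by (intro mult_nonneg_nonneg sum_nonneg) auto
  have Fb: "norm (F x) \<le> C * norm x" if x: "x \<in> X" for x
  proof -
    have zB: "(x, \<psi> x) \<in> B" "(0, \<psi> 0) \<in> B" using x unfolding B_def by auto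
    define N where "N = norm ((x, \<psi> x) - (0, \<psi> 0))"
    have N: "N \<le> (1 + L\<psi>) * norm x"
    proof -
      have "N \<le> norm x + norm (\<psi> x - \<psi> 0)" unfolding N_def using norm_Pair_le[of x "\<psi> x - \<psi> 0"] by simp
      also have "\<dots> \<le> norm x + L\<psi> * norm x" using L\<psi>d[of x 0] by (simp add: dist_norm)
      finally show ?thesis by (simp add: algebra_simps)
    qed
    have "norm (F x) = norm (F x - F 0)" using F0 by simp
    also have "\<dots> \<le> (\<Sum>i\<in>UNIV. \<bar>(F x - F 0) $ i\<bar>)" by (rule norm_le_l1_cart)
    also have "\<dots> \<le> (\<Sum>i\<in>UNIV. \<bar>Lf i\<bar> * N)"
    proof (rule sum_mono)
      fix i
      have "\<bar>(F x - F 0) $ i\<bar> \<le> Lf i * N" unfolding F_def N_def using Lf[OF zB, of i] by simp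
      also have "\<dots> \<le> \<bar>Lf i\<bar> * N" unfolding N_def by (intro mult_right_mono) auto
      finally show "\<bar>(F x - F 0) $ i\<bar> \<le> \<bar>Lf i\<bar> * N" .
    qed
    also have "\<dots> = (\<Sum>i\<in>UNIV. \<bar>Lf i\<bar>) * N" by (simp add: sum_distrib_right)
    also have "\<dots> \<le> (\<Sum>i\<in>UNIV. \<bar>Lf i\<bar>) * ((1 + L\<psi>) * norm x)"
      by (intro mult_left_mono N sum_nonneg) auto
    also have "\<dots> = C * norm x" unfolding C_def by simp
    finally show ?thesis .
  qed
  define R where "R = R1 + C * R1"
  define S where "S = cball (0::real ^ 'n) R"
  have XS: "x \<in> S" and FS: "F x \<in> S" if "x \<in> X" for x
  proof -
    have nx: "norm x \<le> R1" using R1 that by auto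
    then show "x \<in> S" unfolding S_def R_def using C0 R1(2) by (simp add: add_increasing2)
    have "norm (F x) \<le> C * R1" using Fb[OF that] mult_left_mono[OF nx C0] by linarith
    then show "F x \<in> S" unfolding S_def R_def using R1(2) by simp
  qed
  define \<delta> where "\<delta> = 1 / (2 * (C\<^sup>2 + 1))"
  have Cp: "0 < C\<^sup>2 + 1" using zero_le_power2[of C] by linarith
  have \<delta>0: "\<delta> > 0" unfolding \<delta>_def using Cp by simp
  have \<delta>h: "\<delta> \<le> 1/2" unfolding \<delta>_def by (intro frac_le) (use zero_le_power2[of C] in auto)
  have \<delta>C: "2 * \<delta> * (C\<^sup>2 + 1) = 1" unfolding \<delta>_def using Cp by (simp add: field_simps)
  define r where "r x = W x - W 0 - W' 0 x - W'' 0 x x / 2" for x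
  define \<phi> where "\<phi> x = r x / (norm x)\<^sup>2" for x
  have "continuous_on S \<phi>" unfolding \<phi>_def r_def by (rule phi_cont[OF d1 d2 c2])
  then obtain p where p: "real_polynomial_function p" and pa: "\<And>x. x \<in> S \<Longrightarrow> \<bar>\<phi> x - p x\<bar> < \<delta>"
    using Stone_Weierstrass_real_polynomial_function[of S \<phi> \<delta>] \<delta>0 unfolding S_def by auto
  define P where "P x = W 0 + W' 0 x + W'' 0 x x / 2 + (norm x)\<^sup>2 * p x" for x
  define V where "V x = 2 * P x" for x
  have rphi: "r x = (norm x)\<^sup>2 * \<phi> x" for x
    by (cases "x = 0") (simp_all add: \<phi>_def r_def)
  have Pb: "\<bar>P x - W x\<bar> \<le> \<delta> * (norm x)\<^sup>2" if "x \<in> S" for x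
  proof -
    have "P x - W x = (norm x)\<^sup>2 * p x - r x" unfolding P_def r_def by simp
    also have "\<dots> = (norm x)\<^sup>2 * (p x - \<phi> x)" unfolding rphi by (simp add: algebra_simps)
    finally have "\<bar>P x - W x\<bar> = (norm x)\<^sup>2 * \<bar>p x - \<phi> x\<bar>" by (simp add: abs_mult)
    also have "\<dots> \<le> (norm x)\<^sup>2 * \<delta>" using pa[OF that] by (intro mult_left_mono) auto
    finally show ?thesis by (simp add: mult.commute)
  qed
  have polyV: "polyfun V"
  proof -
    have "real_polynomial_function P"
      unfolding P_def
      by (intro Weierstrass_Theorems.real_polynomial_function.intros(3)
           Weierstrass_Theorems.real_polynomial_function.intros(2)
           Weierstrass_Theorems.real_polynomial_function.intros(1) blinfun.bounded_linear_right
           real_polynomial_function_divide quad_rpf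
           Weierstrass_Theorems.real_polynomial_function.intros(4) normsq_rpf p)
    then have "real_polynomial_function V" unfolding V_def
      by (intro Weierstrass_Theorems.real_polynomial_function.intros(4)
           Weierstrass_Theorems.real_polynomial_function.intros(2))
    then show ?thesis by (rule rpf_polyfun)
  qed
  show ?thesis
  proof (intro exI[of _ V] conjI polyV ballI)
    fix z assume "z \<in> {(x, xp). x \<in> X \<and> (\<exists>u lam. (\<forall>i. g (x, u, lam) $ i \<ge> 0) \<and>
                                  h (x, u, lam) = 0 \<and> xp = f (x, u))}"
    then obtain x xp u lam where z: "z = (x, xp)" and x: "x \<in> X" and gh: "\<forall>i. g (x, u, lam) $ i \<ge> 0"
      "h (x, u, lam) = 0" and xp: "xp = f (x, u)" by blast
    have "(x, u) \<in> {(x, u). \<exists>lam. (\<forall>i. g (x, u, lam) $ i \<ge> 0) \<and> h (x, u, lam) = 0}"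
      using gh by blast
    then have "(x, u) \<in> {(x, \<psi> x) | x. True}" using graph by simp
    then have u: "u = \<psi> x" by blast
    have xpF: "xp = F x" unfolding xp u F_def ..
    let ?n = "(norm x)\<^sup>2" and ?nF = "(norm (F x))\<^sup>2"
    have b1: "\<bar>P x - W x\<bar> \<le> \<delta> * ?n" using Pb[OF XS[OF x]] .
    have b2: "\<bar>P (F x) - W (F x)\<bar> \<le> \<delta> * ?nF" using Pb[OF FS[OF x]] .
    have nF: "?nF \<le> C\<^sup>2 * ?n"
    proof -
      have "?nF \<le> (C * norm x)\<^sup>2" by (rule power_mono[OF Fb[OF x]]) simp
      then show ?thesis by (simp add: power_mult_distrib)
    qed
    have dnF: "\<delta> * ?nF \<le> \<delta> * (C\<^sup>2 * ?n)" using nF \<delta>0 by (intro mult_left_mono) auto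
    have key: "2 * (\<delta> * (C\<^sup>2 * ?n)) + 2 * (\<delta> * ?n) = ?n"
    proof -
      have "2 * (\<delta> * (C\<^sup>2 * ?n)) + 2 * (\<delta> * ?n) = (2 * \<delta> * (C\<^sup>2 + 1)) * ?n" by (simp add: algebra_simps)
      then show ?thesis using \<delta>C by simp
    qed
    have dn: "2 * (\<delta> * ?n) \<le> ?n" using \<delta>h mult_right_mono[OF \<delta>h, of ?n] by simp
    have Wd: "W (F x) - W x \<le> - ?n" using W_dec unfolding F_def by blast
    have Wp: "W x \<ge> ?n" using W_pos by blast
    show "case z of (x, xp) \<Rightarrow> V xp - V x \<le> - (norm x)\<^sup>2 \<and> (norm x)\<^sup>2 \<le> V x"
      unfolding z xpF V_def using b1 b2 dnF key dn Wd Wp by (simp add: abs_le_iff)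
  qed
qed

end
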